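(* Let $S$ be a finite set, $n\ge 2$, and $R_1,\dots,R_n$ finite sets of words on $S\cup S^{-1}$; let $\tilde R=[R_n^{S_0},[R_{n-1}^{S_0},\dots[R_2^{S_0},R_1]\dots]]$. Let $\varphi:F(S)\to\mathbb F$ be a homomorphism to a non-abelian free group $\mathbb F$ with non-abelian image. Then $\varphi$ is trivial on every element of $\tilde R$ if and only if there is some $i$ such that $\varphi$ is trivial on every element of $R_i$.
   Context: $F(S)$ is the free group on $S$. $S_0=S\cup\{1\}$; for sets $R,R'$ of words on $S\cup S^{-1}$, $R^{S_0}$ is the set of words obtained by conjugating elements of $R$ by elements of $S_0$, and $[R^{S_0},R']$ is the set of commutators $[u,v]$ with $u\in R^{S_0}$, $v\in R'$. *)

theory Defs
  imports "HOL-Algebra.Group"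
begin

text \<open>Letters of S \<union> S^-1: (s, True) stands for s, (s, False) for s^-1.\<close>
type_synonym 'a letter = "'a \<times> bool"
type_synonym 'a word = "'a letter list"

definition words_on :: "'a set \<Rightarrow> 'a word set" where
  "words_on S = {w. fst ` set w \<subseteq> S}"

fun inv_letter :: "'a letter \<Rightarrow> 'a letter" where
  "inv_letter (a, b) = (a, \<not> b)"

definition inv_word :: "'a word \<Rightarrow> 'a word" where
  "inv_word w = rev (map inv_letter w)"

fun cancel_push :: "'a letter \<Rightarrow> 'a word \<Rightarrow> 'a word" where
  "cancel_push x [] = [x]"
| "cancel_push x (y # ys) = (if y = inv_letter x then ys else x # y # ys)"

definition reduce :: "'a word \<Rightarrow> 'a word" where
  "reduce w = foldr cancel_push w []"

fun reduced :: "'a word \<Rightarrow> bool" where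
  "reduced [] = True"
| "reduced [x] = True"
| "reduced (x # y # ys) = (y \<noteq> inv_letter x \<and> reduced (y # ys))"

definition free_group :: "'a set \<Rightarrow> 'a word monoid" where
  "free_group S = \<lparr>carrier = {w \<in> words_on S. reduced w},
                   mult = (\<lambda>u v. reduce (u @ v)),
                   one = []\<rparr>"

text \<open>R^{S_0}: conjugates of words of R by elements of S_0 = S \<union> {1}, with u^s = s^-1 u s.\<close>
definition conj_S0 :: "'a set \<Rightarrow> 'a word set \<Rightarrow> 'a word set" where
  "conj_S0 S R = R \<union> {[(s, False)] @ r @ [(s, True)] | s r. s \<in> S \<and> r \<in> R}"

definition commutator_word :: "'a word \<Rightarrow> 'a word \<Rightarrow> 'a word" where
  "commutator_word u v = inv_word u @ inv_word v @ u @ v"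

definition comm_set :: "'a word set \<Rightarrow> 'a word set \<Rightarrow> 'a word set" where
  "comm_set A B = {commutator_word u v | u v. u \<in> A \<and> v \<in> B}"

text \<open>nested_comm S R k = [R_k^{S_0}, [R_{k-1}^{S_0}, ... [R_2^{S_0}, R_1] ...]] for k \<ge> 1.\<close>
fun nested_comm :: "'a set \<Rightarrow> (nat \<Rightarrow> 'a word set) \<Rightarrow> nat \<Rightarrow> 'a word set" where
  "nested_comm S R 0 = R 1"
| "nested_comm S R (Suc 0) = R 1"
| "nested_comm S R (Suc (Suc k)) =
     comm_set (conj_S0 S (R (Suc (Suc k)))) (nested_comm S R (Suc k))"

end

theory Submission imports Defs "HOL-Algebra.Group" begin


lemma inv_letter_inv[simp]: "inv_letter (inv_letter x) = x"
  by (cases x) auto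
lemma inv_letter_neq[simp]: "inv_letter x \<noteq> x" "x \<noteq> inv_letter x"
  by (cases x, auto)+
lemma inv_letter_eq_iff[simp]: "inv_letter x = inv_letter y \<longleftrightarrow> x = y"
  by (metis inv_letter_inv)

lemma inv_word_inv[simp]: "inv_word (inv_word w) = w"
  by (simp add: inv_word_def rev_map comp_def)
lemma inv_word_append[simp]: "inv_word (u @ v) = inv_word v @ inv_word u"
  by (simp add: inv_word_def)
lemma inv_word_Nil[simp]: "inv_word [] = []" by (simp add: inv_word_def)
lemma inv_word_Cons[simp]: "inv_word (x # w) = inv_word w @ [inv_letter x]" by (simp add: inv_word_def)
lemma inv_word_length[simp]: "length (inv_word w) = length w" by (simp add: inv_word_def)
lemma inv_word_eq_Nil[simp]: "inv_word w = [] \<longleftrightarrow> w = []" by (simp add: inv_word_def)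
lemma inv_word_eq_iff[simp]: "inv_word u = inv_word v \<longleftrightarrow> u = v" by (metis inv_word_inv)
lemma hd_inv_word: "w \<noteq> [] \<Longrightarrow> hd (inv_word w) = inv_letter (last w)"
  by (simp add: inv_word_def hd_rev last_map)
lemma last_inv_word: "w \<noteq> [] \<Longrightarrow> last (inv_word w) = inv_letter (hd w)"
  by (simp add: inv_word_def last_rev hd_map)
lemma set_inv_word: "fst ` set (inv_word w) = fst ` set w"
  by (induct w) auto

lemma reduced_Cons: "reduced (x # w) \<longleftrightarrow> reduced w \<and> (w = [] \<or> hd w \<noteq> inv_letter x)"
  by (cases w) auto

lemma reduced_append: "reduced (u @ v) \<longleftrightarrow> reduced u \<and> reduced v \<and> (u = [] \<or> v = [] \<or> hd v \<noteq> inv_letter (last u))"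
  by (induct u) (auto simp: reduced_Cons)

lemma reduced_inv_word[simp]: "reduced (inv_word w) \<longleftrightarrow> reduced w"
proof (induct w)
  case (Cons x w)
  then show ?case
    by (cases w) (auto simp: reduced_append reduced_Cons last_inv_word)
qed simp

lemma cancel_push_reduced: "reduced w \<Longrightarrow> reduced (cancel_push x w)"
  by (cases w) (auto simp: reduced_Cons)

lemma reduce_Nil[simp]: "reduce [] = []" by (simp add: reduce_def)
lemma reduce_Cons: "reduce (x # w) = cancel_push x (reduce w)" by (simp add: reduce_def)

lemma reduced_reduce[simp]: "reduced (reduce w)"
  by (induct w) (auto simp: reduce_Cons cancel_push_reduced)

lemma reduce_reduced: "reduced w \<Longrightarrow> reduce w = w"
proof (induct w)
  case (Cons x w)
  then show ?case by (cases w) (auto simp: reduce_Cons reduced_Cons)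
qed simp

lemma reduce_append_foldr: "reduce (u @ v) = foldr cancel_push u (reduce v)"
  by (simp add: reduce_def)

lemma cancel_push_inv: "reduced w \<Longrightarrow> cancel_push x (cancel_push (inv_letter x) w) = w"
proof (cases w)
  case (Cons y ys)
  assume r: "reduced w"
  show ?thesis
  proof (cases "y = x")
    case True
    then show ?thesis using Cons r by (cases ys) (auto simp: reduced_Cons)
  qed (use Cons in auto)
qed simp

lemma cancel_push_inv': "reduced w \<Longrightarrow> cancel_push (inv_letter x) (cancel_push x w) = w"
  using cancel_push_inv[of w "inv_letter x"] by simp

lemma foldr_cancel_reduced: "reduced w \<Longrightarrow> reduced (foldr cancel_push u w)"
  by (induct u) (auto simp: cancel_push_reduced)

lemma cancel_push_not: "\<not> (\<exists>r'. r = inv_letter x # r') \<Longrightarrow> cancel_push x r = x # r"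
  by (cases r) auto

lemma foldr_reduce: "reduced w \<Longrightarrow> foldr cancel_push (reduce u) w = foldr cancel_push u w"
proof (induct u arbitrary: w)
  case (Cons x u)
  show ?case
  proof (cases "\<exists>r'. reduce u = inv_letter x # r'")
    case True
    then obtain r' where r': "reduce u = inv_letter x # r'" by blast
    have "foldr cancel_push (reduce (x # u)) w = foldr cancel_push r' w"
      by (simp add: reduce_Cons r')
    also have "\<dots> = cancel_push x (cancel_push (inv_letter x) (foldr cancel_push r' w))"
      by (rule cancel_push_inv[symmetric]) (simp add: Cons.prems foldr_cancel_reduced)
    also have "\<dots> = cancel_push x (foldr cancel_push (reduce u) w)" by (simp add: r')
    also have "\<dots> = foldr cancel_push (x # u) w" using Cons by simp
    finally show ?thesis .
  next
    case False
    then show ?thesis using Cons by (simp add: reduce_Cons cancel_push_not)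
  qed
qed simp

lemma reduce_append_left: "reduce (reduce u @ v) = reduce (u @ v)"
  by (simp add: reduce_append_foldr foldr_reduce)
lemma reduce_append_right: "reduce (u @ reduce v) = reduce (u @ v)"
  by (simp add: reduce_append_foldr reduce_reduced)

lemma reduce_inv_cancel: "reduce (inv_word u @ u) = []"
proof (induct u)
  case (Cons x u)
  have "reduce (inv_word (x # u) @ x # u) = foldr cancel_push (inv_word u) (cancel_push (inv_letter x) (cancel_push x (reduce u)))"
    by (simp add: reduce_append_foldr reduce_Cons)
  also have "\<dots> = foldr cancel_push (inv_word u) (reduce u)" by (simp add: cancel_push_inv')
  also have "\<dots> = []" using Cons by (simp add: reduce_append_foldr)
  finally show ?case .
qed simp

lemma reduce_cancel_inv: "reduce (u @ inv_word u) = []"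
  using reduce_inv_cancel[of "inv_word u"] by simp

lemma set_cancel_push: "set (cancel_push x w) \<subseteq> insert x (set w)"
  by (cases w) auto
lemma set_reduce: "set (reduce w) \<subseteq> set w"
  by (induct w) (use set_cancel_push in \<open>fastforce simp: reduce_Cons\<close>)+

lemma words_on_Nil[simp]: "[] \<in> words_on S" by (simp add: words_on_def)
lemma words_on_append[simp]: "u @ v \<in> words_on S \<longleftrightarrow> u \<in> words_on S \<and> v \<in> words_on S"
  by (auto simp: words_on_def)
lemma words_on_inv[simp]: "inv_word u \<in> words_on S \<longleftrightarrow> u \<in> words_on S"
  by (simp add: words_on_def set_inv_word)
lemma words_on_reduce: "u \<in> words_on S \<Longrightarrow> reduce u \<in> words_on S"
  using set_reduce[of u] by (auto simp: words_on_def)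

lemma free_group_simps[simp]: "carrier (free_group S) = {w \<in> words_on S. reduced w}"
  "x \<otimes>\<^bsub>free_group S\<^esub> y = reduce (x @ y)" "\<one>\<^bsub>free_group S\<^esub> = []"
  by (simp_all add: free_group_def)

lemma group_free_group: "group (free_group S)"
proof (rule groupI)
  fix x y z assume "x \<in> carrier (free_group S)" "y \<in> carrier (free_group S)" "z \<in> carrier (free_group S)"
  show "x \<otimes>\<^bsub>free_group S\<^esub> y \<otimes>\<^bsub>free_group S\<^esub> z = x \<otimes>\<^bsub>free_group S\<^esub> (y \<otimes>\<^bsub>free_group S\<^esub> z)"
    by (simp add: reduce_append_left reduce_append_right)
next
  fix x assume x: "x \<in> carrier (free_group S)"
  then show "\<exists>y\<in>carrier (free_group S). y \<otimes>\<^bsub>free_group S\<^esub> x = \<one>\<^bsub>free_group S\<^esub>"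
    by (intro bexI[of _ "inv_word x"]) (auto simp: reduce_inv_cancel)
qed (auto simp: words_on_reduce reduce_reduced intro: words_on_reduce[unfolded words_on_def, simplified])

lemma inv_free_group: "x \<in> carrier (free_group S) \<Longrightarrow> inv\<^bsub>free_group S\<^esub> x = inv_word x"
  by (rule group.inv_equality[OF group_free_group]) (auto simp: reduce_inv_cancel)


lemma dec:
  assumes "reduced x" "reduced y"
  shows "\<exists>x1 c y1. x = x1 @ c \<and> y = inv_word c @ y1 \<and> reduce (x @ y) = x1 @ y1 \<and>
           (x1 = [] \<or> y1 = [] \<or> hd y1 \<noteq> inv_letter (last x1))"
  using assms(1)
proof (induct x)
  case Nil
  show ?case by (rule exI[of _ "[]"], rule exI[of _ "[]"], rule exI[of _ y]) (simp add: reduce_reduced assms)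
next
  case (Cons a x)
  from Cons.prems have rx: "reduced x" and hx: "x = [] \<or> hd x \<noteq> inv_letter a" by (simp_all add: reduced_Cons)
  from Cons.hyps[OF rx] obtain x1 c y1 where d: "x = x1 @ c" "y = inv_word c @ y1" "reduce (x @ y) = x1 @ y1"
    and b: "x1 = [] \<or> y1 = [] \<or> hd y1 \<noteq> inv_letter (last x1)" by blast
  have eq: "reduce ((a # x) @ y) = cancel_push a (x1 @ y1)" by (simp add: reduce_Cons d(3))
  show ?case
  proof (cases "x1 = [] \<and> y1 \<noteq> [] \<and> hd y1 = inv_letter a")
    case True
    then obtain y2 where y1: "y1 = inv_letter a # y2" by (cases y1) auto
    show ?thesis
      by (rule exI[of _ "[]"], rule exI[of _ "a # c"], rule exI[of _ y2]) (use True y1 d eq in auto)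
  next
    case False
    have "cancel_push a (x1 @ y1) = a # x1 @ y1"
    proof (cases "x1 = []")
      case True
      then show ?thesis using False by (cases y1) auto
    next
      case f: False
      then have "hd x1 \<noteq> inv_letter a" using hx d(1) by auto
      then show ?thesis using f by (cases x1) auto
    qed
    moreover have "a # x1 = [] \<or> y1 = [] \<or> hd y1 \<noteq> inv_letter (last (a # x1))"
      using False b by auto
    ultimately show ?thesis
      by (intro exI[of _ "a # x1"] exI[of _ c] exI[of _ y1]) (use d eq in auto)
  qed
qed

definition cyc_red :: "'a word \<Rightarrow> bool" where
  "cyc_red z \<longleftrightarrow> reduced z \<and> z \<noteq> [] \<and> hd z \<noteq> inv_letter (last z)"

lemma cyc_red_inv: "cyc_red z \<Longrightarrow> cyc_red (inv_word z)"
  by (auto simp: cyc_red_def hd_inv_word last_inv_word)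

lemma cnf:
  assumes "reduced w"
  shows "\<exists>p z. w = inv_word p @ z @ p \<and> (z = [] \<or> cyc_red z)"
  using assms
proof (induct "length w" arbitrary: w rule: less_induct)
  case less
  show ?case
  proof (cases "w = [] \<or> cyc_red w")
    case True
    then show ?thesis by (intro exI[of _ "[]"] exI[of _ w]) auto
  next
    case False
    then have hw: "w \<noteq> []" "hd w = inv_letter (last w)" using less.prems by (auto simp: cyc_red_def)
    obtain x m where wx: "w = x # m" using hw by (cases w) auto
    have "m \<noteq> []" using hw wx by auto
    then obtain m' y where my: "m = m' @ [y]" by (metis rev_exhaust)
    have xy: "x = inv_letter y" using hw wx my by simp
    have "reduced m'" using less.prems wx my by (simp add: reduced_Cons reduced_append)
    from less.hyps[OF _ this] obtain p z where "m' = inv_word p @ z @ p" "z = [] \<or> cyc_red z"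
      using wx my by auto
    then show ?thesis using wx my xy
      by (intro exI[of _ "p @ [y]"] exI[of _ z]) auto
  qed
qed

lemma concat_replicate_mult: "concat (replicate m (concat (replicate a d))) = concat (replicate (m * a) d)"
  by (induct m) (auto simp: replicate_add)

lemma concat_replicate_Suc_right: "concat (replicate (Suc k) e) = concat (replicate k e) @ e"
  by (induct k) auto

lemma ls2:
  assumes eq: "concat (replicate m e) = concat (replicate n f)" and "m \<ge> 1" "n \<ge> 1"
  shows "\<exists>d a b. e = concat (replicate a d) \<and> f = concat (replicate b d)"
proof (cases "m = 1 \<or> n = 1")
  case True
  then show ?thesis
  proof
    assume "m = 1" then show ?thesis using eq
      by (intro exI[of _ f] exI[of _ n] exI[of _ 1]) auto
  next
    assume "n = 1" then show ?thesis using eq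
      by (intro exI[of _ e] exI[of _ 1] exI[of _ m]) auto
  qed
next
  case False
  then have m2: "m \<ge> 2" "n \<ge> 2" using assms by auto
  define w where "w = concat (replicate m e)"
  have ew: "e @ w = w @ e" unfolding w_def
    by (metis concat.simps(2) concat_replicate_Suc_right replicate_Suc)
  have fw: "f @ w = w @ f" unfolding w_def eq
    by (metis concat.simps(2) concat_replicate_Suc_right replicate_Suc)
  have lw1: "length w = m * length e" unfolding w_def
    by (simp add: length_concat sum_list_replicate)
  have lw2: "length w = n * length f" unfolding w_def eq
    by (simp add: length_concat sum_list_replicate)
  note lw = lw1 lw2
  have "2 * length e \<le> length w" using lw1 m2(1) by (simp add: mult_le_mono1)
  moreover have "2 * length f \<le> length w" using lw2 m2(2) by (simp add: mult_le_mono1)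
  ultimately have len: "length e + length f \<le> length w" by linarith
  have 1: "e @ f @ w = w @ e @ f" using ew fw by (metis append.assoc)
  have 2: "f @ e @ w = w @ f @ e" using ew fw by (metis append.assoc)
  have "e @ f = take (length e + length f) w"
    using arg_cong[OF 1, of "take (length e + length f)"] len by simp
  moreover have "f @ e = take (length e + length f) w"
    using arg_cong[OF 2, of "take (length e + length f)"] len by (simp add: add.commute)
  ultimately have "e @ f = f @ e" by simp
  then show ?thesis using comm_append_are_replicate by metis
qed


abbreviation FG :: "'b word monoid" where "FG \<equiv> free_group UNIV"

interpretation fg: group "free_group UNIV"
  by (rule group_free_group)

lemma words_on_UNIV[simp]: "words_on UNIV = UNIV" by (simp add: words_on_def)

lemma carrier_FG[simp]: "x \<in> carrier FG \<longleftrightarrow> reduced x"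
  by (simp add: words_on_def)

lemma reduce_cancel1: "reduce (u @ inv_word u @ v) = reduce v"
  by (metis append.assoc append.left_neutral reduce_append_left reduce_cancel_inv)
lemma reduce_cancel2: "reduce (inv_word u @ u @ v) = reduce v"
  by (metis append.assoc append.left_neutral reduce_append_left reduce_inv_cancel)
lemma reduce_cancel3: "reduce (v @ u @ inv_word u) = reduce v"
  by (metis append_Nil2 reduce_append_right reduce_cancel_inv)
lemma reduce_cancel4: "reduce (v @ inv_word u @ u) = reduce v"
  by (metis append_Nil2 reduce_append_right reduce_inv_cancel)

lemma hd_concat_replicate: "f \<noteq> [] \<Longrightarrow> k \<ge> 1 \<Longrightarrow> hd (concat (replicate k f)) = hd f"
  by (cases k) auto

lemma reduced_concat_rep: "cyc_red f \<Longrightarrow> reduced (concat (replicate k f))"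
proof (induct k)
  case (Suc k)
  then show ?case
    by (cases k) (auto simp: reduced_append cyc_red_def hd_concat_replicate)
qed simp

lemma R1:
  assumes "cyc_red z" "z = concat (replicate m f)" "m \<ge> 1"
  shows "cyc_red f"
proof -
  obtain k where m: "m = Suc k" using assms(3) by (cases m) auto
  have z1: "z = f @ concat (replicate k f)" using assms(2) m by simp
  have z2: "z = concat (replicate k f) @ f" using assms(2) m concat_replicate_Suc_right by metis
  have "f \<noteq> []" using assms(1) z1 by (auto simp: cyc_red_def)
  moreover have "reduced f" using assms(1) z1 by (simp add: cyc_red_def reduced_append)
  moreover have "hd z = hd f" using z1 \<open>f \<noteq> []\<close> by simp
  moreover have "last z = last f" using z2 \<open>f \<noteq> []\<close> by simp
  ultimately show ?thesis using assms(1) by (auto simp: cyc_red_def)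
qed

lemma pow_cyc: "cyc_red f \<Longrightarrow> f [^]\<^bsub>FG\<^esub> (k::nat) = concat (replicate k f)"
proof (induct k)
  case (Suc k)
  then show ?case
    using reduced_concat_rep[OF Suc.prems, of "Suc k"]
    by (simp add: reduce_reduced concat_replicate_Suc_right[symmetric] del: concat_replicate_Suc_right)
qed (simp)

lemma cyc_red_carrier: "cyc_red f \<Longrightarrow> f \<in> carrier FG"
  by (simp add: cyc_red_def)

lemma R2:
  assumes "cyc_red e" "e [^]\<^bsub>FG\<^esub> (i::int) = e [^]\<^bsub>FG\<^esub> j"
  shows "i = j"
proof (rule ccontr)
  assume ne: "i \<noteq> j"
  have ec: "e \<in> carrier FG" using assms(1) by (rule cyc_red_carrier)
  have one: "e [^]\<^bsub>FG\<^esub> (i - j) = \<one>\<^bsub>FG\<^esub>"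
    using fg.int_pow_diff[OF ec, of i j] assms(2) fg.r_inv[OF fg.int_pow_closed[OF ec, of j]] by simp
  have nz: "e [^]\<^bsub>FG\<^esub> (n::nat) \<noteq> \<one>\<^bsub>FG\<^esub>" if "n \<ge> 1" for n
  proof -
    have "e [^]\<^bsub>FG\<^esub> n = concat (replicate n e)" by (rule pow_cyc[OF assms(1)])
    moreover have "concat (replicate n e) \<noteq> []" using that assms(1)
      by (cases n) (auto simp: cyc_red_def)
    ultimately show ?thesis by (simp add: free_group_simps)
  qed
  show False
  proof (cases "i - j > 0")
    case True
    then have "e [^]\<^bsub>FG\<^esub> (nat (i - j)) = \<one>\<^bsub>FG\<^esub>" using one pow_nat[of "i - j" FG e] by simp
    moreover have "nat (i - j) \<ge> 1" using True by simp
    ultimately show False using nz by blast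
  next
    case False
    then have pos: "j - i > 0" using ne by simp
    have "e [^]\<^bsub>FG\<^esub> (i - j) = inv\<^bsub>FG\<^esub> (e [^]\<^bsub>FG\<^esub> (j - i))"
      using fg.int_pow_neg[OF ec, of "j - i"] by simp
    then have "inv\<^bsub>FG\<^esub> (e [^]\<^bsub>FG\<^esub> (j - i)) = \<one>\<^bsub>FG\<^esub>" using one by simp
    then have "e [^]\<^bsub>FG\<^esub> (j - i) = \<one>\<^bsub>FG\<^esub>"
      by (metis ec fg.int_pow_closed fg.inv_inv fg.inv_one)
    then have "e [^]\<^bsub>FG\<^esub> (nat (j - i)) = \<one>\<^bsub>FG\<^esub>" using pos pow_nat[of "j - i" FG e] by simp
    moreover have "nat (j - i) \<ge> 1" using pos by simp
    ultimately show False using nz by blast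
  qed
qed


lemma reduce_inv: "reduce (inv_word w) = inv_word (reduce w)"
proof -
  have "reduce (inv_word w) = reduce (inv_word w @ reduce w @ inv_word (reduce w))"
    using reduce_cancel3[of "inv_word w" "reduce w"] by simp
  also have "\<dots> = reduce (reduce (inv_word w @ reduce w) @ inv_word (reduce w))"
    by (simp add: reduce_append_left)
  also have "\<dots> = reduce (reduce (inv_word w @ w) @ inv_word (reduce w))"
    by (simp add: reduce_append_right)
  also have "\<dots> = inv_word (reduce w)"
    by (simp add: reduce_inv_cancel reduce_reduced)
  finally show ?thesis .
qed

lemma core:
  assumes cz: "cyc_red z" and ry: "reduced y" and cm: "reduce (y @ z) = reduce (z @ y)" and yne: "y \<noteq> []"
   and hy: "hd y = inv_letter (last z)" and nA: "\<not> (\<exists>y'. y = inv_word z @ y')"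
  shows "\<exists>c z1. c @ z1 = z1 @ c \<and> z = c @ z1 \<and> y = inv_word c"
proof -
  have rz: "reduced z" and zne: "z \<noteq> []" and hz: "hd z \<noteq> inv_letter (last z)"
    using cz by (auto simp: cyc_red_def)
  obtain z1 c y1 where d1: "z = z1 @ c" "y = inv_word c @ y1" "reduce (z @ y) = z1 @ y1"
    and b1: "z1 = [] \<or> y1 = [] \<or> hd y1 \<noteq> inv_letter (last z1)" using dec[OF rz ry] by blast
  have cne: "c \<noteq> []"
  proof
    assume "c = []"
    then show False using d1 b1 zne yne hy by simp
  qed
  have z1ne: "z1 \<noteq> []"
  proof
    assume "z1 = []"
    then show False using d1 nA by auto
  qed
  obtain y2 d z2 where d2: "y = y2 @ d" "z = inv_word d @ z2" "reduce (y @ z) = y2 @ z2"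
    using dec[OF ry rz] by blast
  have eq: "y2 @ z2 = z1 @ y1" using d1(3) d2(3) cm by simp
  have y2: "y2 = []"
  proof (rule ccontr)
    assume ne: "y2 \<noteq> []"
    then have "hd y = hd z" using eq d1(1) d2(1) z1ne by (metis hd_append2)
    then show False using hy hz by simp
  qed
  have yd: "y = d" and z2: "z2 = z1 @ y1" using d2(1) eq y2 by auto
  have "inv_word y = inv_word y1 @ c" using d1(2) by simp
  then have "z = inv_word y1 @ c @ z1 @ y1" using d2(2) yd z2 by simp
  then have "length z = length y1 + length c + length z1 + length y1" by simp
  then have "length y1 = 0" using d1(1) by simp
  then have y1: "y1 = []" by simp
  show ?thesis
    using d1 d2 yd z2 y1 eq by (intro exI[of _ c] exI[of _ z1]) auto
qed

lemma shape:
  assumes "c @ z1 = z1 @ c" "z = c @ z1" "y = inv_word c" "cyc_red z"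
  shows "\<exists>e m j. m \<ge> 1 \<and> z = concat (replicate m e) \<and> cyc_red e \<and> y = e [^]\<^bsub>FG\<^esub> (j::int)"
proof -
  obtain a b f where ab: "concat (replicate a f) = c" "concat (replicate b f) = z1"
    using comm_append_are_replicate[OF assms(1)] by blast
  have z: "z = concat (replicate (a + b) f)" using ab assms(2) by (simp add: replicate_add)
  have "a + b \<ge> 1" using z assms(4) by (cases "a + b") (auto simp: cyc_red_def)
  then have cf: "cyc_red f" using R1[OF assms(4) z] by simp
  have fc: "f \<in> carrier FG" using cf by (rule cyc_red_carrier)
  have "y = inv_word (f [^]\<^bsub>FG\<^esub> a)" using assms(3) ab pow_cyc[OF cf] by simp
  also have "\<dots> = inv\<^bsub>FG\<^esub> (f [^]\<^bsub>FG\<^esub> a)"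
    using inv_free_group[of "f [^]\<^bsub>FG\<^esub> a" UNIV] fg.nat_pow_closed[OF fc, of a] by simp
  also have "\<dots> = f [^]\<^bsub>FG\<^esub> (- int a)" using fg.int_pow_neg_int[OF fc] by simp
  finally show ?thesis using z \<open>a + b \<ge> 1\<close> cf by blast
qed


lemma comm_shift1:
  assumes "reduce (y @ z) = reduce (z @ y)"
  shows "reduce (reduce (z @ y) @ z) = reduce (z @ reduce (z @ y))"
proof -
  have "reduce (reduce (z @ y) @ z) = reduce (z @ reduce (y @ z))"
    by (simp add: reduce_append_left reduce_append_right)
  then show ?thesis using assms by simp
qed

lemma comm_shift2:
  assumes "reduce (y @ z) = reduce (z @ y)"
  shows "reduce (reduce (y @ z) @ z) = reduce (z @ reduce (y @ z))"
  using comm_shift1[OF assms] assms by simp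

lemma C1:
  assumes cz: "cyc_red z"
  shows "reduced y \<Longrightarrow> reduce (y @ z) = reduce (z @ y) \<Longrightarrow>
    \<exists>e m j. m \<ge> 1 \<and> z = concat (replicate m e) \<and> cyc_red e \<and> y = e [^]\<^bsub>FG\<^esub> (j::int)"
proof (induct "length y" arbitrary: y rule: less_induct)
  case less
  note ry = less.prems(1) and cm = less.prems(2)
  have rz: "reduced z" and zne: "z \<noteq> []" and hz: "hd z \<noteq> inv_letter (last z)"
    using cz by (auto simp: cyc_red_def)
  have zc: "z \<in> carrier FG" using rz by simp
  show ?case
  proof (cases "y = []")
    case True
    then show ?thesis using cz
      by (intro exI[of _ z] exI[of _ 1] exI[of _ 0]) auto
  next
    case yne: False
    show ?thesis
    proof (cases "\<exists>y'. y = inv_word z @ y'")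
      case True
      then obtain y' where y: "y = inv_word z @ y'" by blast
      have ry': "reduced y'" using ry y by (simp add: reduced_append)
      have y'eq: "y' = reduce (z @ y)" using y ry' by (simp add: reduce_cancel1 reduce_reduced)
      have cm': "reduce (y' @ z) = reduce (z @ y')" using comm_shift1[OF cm] y'eq by simp
      have "length y' < length y" using y zne by simp
      from less.hyps[OF this ry' cm'] obtain e m j where
        h: "m \<ge> 1" "z = concat (replicate m e)" "cyc_red e" "y' = e [^]\<^bsub>FG\<^esub> (j::int)" by blast
      have ec: "e \<in> carrier FG" using h(3) by (rule cyc_red_carrier)
      have zp: "z = e [^]\<^bsub>FG\<^esub> (int m)" using h pow_cyc int_pow_int by metis
      have "y = reduce (inv_word z @ y')" using ry y by (simp add: reduce_reduced)
      also have "\<dots> = inv\<^bsub>FG\<^esub> z \<otimes>\<^bsub>FG\<^esub> y'" using zc by (simp add: inv_free_group del: carrier_FG)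
      also have "\<dots> = e [^]\<^bsub>FG\<^esub> (- int m + j)"
        using ec by (simp only: zp h(4) fg.int_pow_mult fg.int_pow_neg)
      finally show ?thesis using h by blast
    next
      case nA: False
      show ?thesis
      proof (cases "\<exists>y'. y = y' @ inv_word z")
        case True
        then obtain y' where y: "y = y' @ inv_word z" by blast
        have ry': "reduced y'" using ry y by (simp add: reduced_append)
        have y'eq: "y' = reduce (y @ z)" using y ry' by (simp add: reduce_cancel4 reduce_reduced)
        have cm': "reduce (y' @ z) = reduce (z @ y')" using comm_shift2[OF cm] y'eq by simp
        have "length y' < length y" using y zne by simp
        from less.hyps[OF this ry' cm'] obtain e m j where
          h: "m \<ge> 1" "z = concat (replicate m e)" "cyc_red e" "y' = e [^]\<^bsub>FG\<^esub> (j::int)" by blast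
        have ec: "e \<in> carrier FG" using h(3) by (rule cyc_red_carrier)
        have zp: "z = e [^]\<^bsub>FG\<^esub> (int m)" using h pow_cyc int_pow_int by metis
        have "y = reduce (y' @ inv_word z)" using ry y by (simp add: reduce_reduced)
        also have "\<dots> = y' \<otimes>\<^bsub>FG\<^esub> inv\<^bsub>FG\<^esub> z" using zc by (simp add: inv_free_group del: carrier_FG)
        also have "\<dots> = e [^]\<^bsub>FG\<^esub> (j + - int m)"
          using ec by (simp only: zp h(4) fg.int_pow_mult fg.int_pow_neg)
        finally show ?thesis using h by blast
      next
        case nA2: False
        show ?thesis
        proof (cases "hd y = inv_letter (last z)")
          case True
          from core[OF cz ry cm yne True nA] obtain c z1 where "c @ z1 = z1 @ c" "z = c @ z1" "y = inv_word c"
            by blast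
          then show ?thesis using shape cz by blast
        next
          case nB1: False
          show ?thesis
          proof (cases "last y = inv_letter (hd z)")
            case True
            have cm2: "reduce (inv_word y @ inv_word z) = reduce (inv_word z @ inv_word y)"
              using cm by (metis inv_word_append reduce_inv)
            have h2: "hd (inv_word y) = inv_letter (last (inv_word z))"
              using True yne zne by (simp add: hd_inv_word last_inv_word)
            have nA': "\<not> (\<exists>y'. inv_word y = inv_word (inv_word z) @ y')"
            proof
              assume "\<exists>y'. inv_word y = inv_word (inv_word z) @ y'"
              then obtain y' where "inv_word y = z @ y'" by auto
              then have "y = inv_word y' @ inv_word z" by (metis inv_word_append inv_word_inv)
              then show False using nA2 by blast
            qed
            from core[OF cyc_red_inv[OF cz] _ cm2 _ h2 nA'] ry yne
            obtain c z1 where cz1: "c @ z1 = z1 @ c" "inv_word z = c @ z1" "inv_word y = inv_word c"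
              by auto
            have "inv_word c @ inv_word z1 = inv_word z1 @ inv_word c" using cz1(1)
              by (metis inv_word_append)
            moreover have "z = inv_word c @ inv_word z1" using cz1 by (metis inv_word_append inv_word_inv)
            moreover have "y = inv_word (inv_word c)" using cz1 by simp
            ultimately show ?thesis using shape[of "inv_word c" "inv_word z1" z y] cz by blast
          next
            case nB2: False
            have r1: "reduced (y @ z)" using ry rz nB2 yne zne by (simp add: reduced_append) (metis inv_letter_inv)
            have r2: "reduced (z @ y)" using ry rz nB1 yne zne by (simp add: reduced_append)
            have "y @ z = z @ y" using cm by (simp add: reduce_reduced r1 r2)
            then obtain a b f where ab: "concat (replicate a f) = y" "concat (replicate b f) = z"
              using comm_append_are_replicate by blast
            have "b \<ge> 1" using ab zne by (cases b) auto
            then have cf: "cyc_red f" using R1[OF cz ab(2)[symmetric]] by simp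
            have "y = f [^]\<^bsub>FG\<^esub> (int a)" using ab pow_cyc[OF cf] int_pow_int by metis
            then show ?thesis using ab \<open>b \<ge> 1\<close> cf by metis
          qed
        qed
      qed
    qed
  qed
qed

lemma prim:
  assumes cz: "cyc_red z"
  shows "\<exists>e m. m \<ge> 1 \<and> z = concat (replicate m e) \<and> cyc_red e \<and>
     (\<forall>y. reduced y \<longrightarrow> reduce (y @ z) = reduce (z @ y) \<longrightarrow> (\<exists>j::int. y = e [^]\<^bsub>FG\<^esub> j))"
proof -
  define P where "P e \<longleftrightarrow> (\<exists>m\<ge>1. z = concat (replicate m e))" for e
  have "P z" unfolding P_def by (intro exI[of _ 1]) simp
  then obtain e where Pe: "P e" and mn: "\<And>e'. P e' \<Longrightarrow> length e \<le> length e'"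
    using ex_has_least_nat[of P z length] by blast
  then obtain m where m: "m \<ge> 1" "z = concat (replicate m e)" unfolding P_def by blast
  have ce: "cyc_red e" using R1[OF cz m(2) m(1)] .
  have ene: "e \<noteq> []" using ce by (simp add: cyc_red_def)
  have ec: "e \<in> carrier FG" using ce by (rule cyc_red_carrier)
  have "\<exists>j::int. y = e [^]\<^bsub>FG\<^esub> j" if ry: "reduced y" and cm: "reduce (y @ z) = reduce (z @ y)" for y
  proof -
    from C1[OF cz ry cm] obtain f k j where fk: "k \<ge> 1" "z = concat (replicate k f)" "cyc_red f"
      "y = f [^]\<^bsub>FG\<^esub> (j::int)" by blast
    from ls2[of m e k f] m fk obtain d a b where dab: "e = concat (replicate a d)" "f = concat (replicate b d)"
      by auto
    have "a \<ge> 1" using dab ene by (cases a) auto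
    then have "P d" unfolding P_def using m dab concat_replicate_mult[of m a d]
      by (intro exI[of _ "m * a"]) simp
    then have "length e \<le> length d" by (rule mn)
    moreover have "length e = a * length d" using dab by (simp add: length_concat sum_list_replicate)
    moreover have "d \<noteq> []" using dab ene by auto
    ultimately have "a = 1" using \<open>a \<ge> 1\<close> by (cases a) auto
    then have "e = d" using dab by simp
    then have "f = e [^]\<^bsub>FG\<^esub> (int b)" using dab pow_cyc[OF ce] int_pow_int by metis
    then have "y = e [^]\<^bsub>FG\<^esub> (int b * j)" using fk(4) fg.int_pow_pow[OF ec] by simp
    then show ?thesis by blast
  qed
  then show ?thesis using m ce by blast
qed


context group begin

lemma cancel_l1[simp]: "x \<in> carrier G \<Longrightarrow> y \<in> carrier G \<Longrightarrow> inv x \<otimes> (x \<otimes> y) = y"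
  by (simp flip: m_assoc)
lemma cancel_l2[simp]: "x \<in> carrier G \<Longrightarrow> y \<in> carrier G \<Longrightarrow> x \<otimes> (inv x \<otimes> y) = y"
  by (simp flip: m_assoc)

lemma pow_comm: "e \<in> carrier G \<Longrightarrow> e [^] (i::int) \<otimes> e [^] (j::int) = e [^] j \<otimes> e [^] i"
  by (simp flip: int_pow_mult add: add.commute)

lemma conj_hom: "a \<in> carrier G \<Longrightarrow> (\<lambda>x. inv a \<otimes> x \<otimes> a) \<in> hom G G"
  unfolding hom_def by (auto simp: m_assoc)

lemma conj_pow: "a \<in> carrier G \<Longrightarrow> x \<in> carrier G \<Longrightarrow> (inv a \<otimes> x \<otimes> a) [^] (i::int) = inv a \<otimes> x [^] i \<otimes> a"
  using hom_int_pow[OF conj_hom, of a x i] is_group by simp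

lemma comm_inv:
  assumes "x \<in> carrier G" "y \<in> carrier G" "x \<otimes> y = y \<otimes> x"
  shows "x \<otimes> inv y = inv y \<otimes> x"
proof -
  have "x \<otimes> inv y = inv y \<otimes> (y \<otimes> x) \<otimes> inv y" using assms(1,2) by (simp add: m_assoc)
  also have "\<dots> = inv y \<otimes> (x \<otimes> y) \<otimes> inv y" using assms by simp
  also have "\<dots> = inv y \<otimes> x" using assms(1,2) by (simp add: m_assoc)
  finally show ?thesis .
qed

lemma comm_int_pow:
  assumes "x \<in> carrier G" "y \<in> carrier G" "x \<otimes> y = y \<otimes> x"
  shows "x \<otimes> y [^] (i::int) = y [^] i \<otimes> x"
proof (cases "i < 0")
  case True
  have "x \<otimes> y [^] nat (- i) = y [^] nat (- i) \<otimes> x"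
    using group_commutes_pow[of y x "nat (-i)"] assms by metis
  then have "x \<otimes> inv (y [^] nat (- i)) = inv (y [^] nat (- i)) \<otimes> x"
    using comm_inv[OF assms(1) nat_pow_closed[OF assms(2)]] by simp
  moreover have "y [^] i = inv (y [^] nat (- i))" using int_pow_def2[of G y i] True by presburger
  ultimately show ?thesis by simp
next
  case False
  have "x \<otimes> y [^] nat i = y [^] nat i \<otimes> x"
    using group_commutes_pow[of y x "nat i"] assms by metis
  moreover have "y [^] i = y [^] nat i" using int_pow_def2[of G y i] False by presburger
  ultimately show ?thesis by simp
qed

end

locale cycc = group +
  assumes cent: "X \<in> carrier G \<Longrightarrow> X \<noteq> \<one> \<Longrightarrow> \<exists>e\<in>carrier G. (\<exists>m::int. X = e [^] m) \<and>
     (\<forall>y\<in>carrier G. y \<otimes> X = X \<otimes> y \<longrightarrow> (\<exists>j::int. y = e [^] j)) \<and> (\<forall>i j::int. e [^] i = e [^] j \<longrightarrow> i = j)"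
  and tf2: "t \<in> carrier G \<Longrightarrow> t \<otimes> t = \<one> \<Longrightarrow> t = \<one>"
begin

lemma CT:
  assumes "X \<in> carrier G" "X \<noteq> \<one>" "a \<in> carrier G" "b \<in> carrier G"
    "a \<otimes> X = X \<otimes> a" "b \<otimes> X = X \<otimes> b"
  shows "a \<otimes> b = b \<otimes> a"
proof -
  obtain e where e: "e \<in> carrier G" "\<forall>y\<in>carrier G. y \<otimes> X = X \<otimes> y \<longrightarrow> (\<exists>j::int. y = e [^] j)"
    using cent[OF assms(1,2)] by blast
  then obtain i j :: int where "a = e [^] i" "b = e [^] j" using assms by blast
  then show ?thesis using pow_comm[OF e(1)] by simp
qed

lemma Bp:
  assumes g: "g \<in> carrier G" "g \<noteq> \<one>" and t: "t \<in> carrier G"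
    and cm: "g \<otimes> (inv t \<otimes> g \<otimes> t) = (inv t \<otimes> g \<otimes> t) \<otimes> g"
  shows "t \<otimes> g = g \<otimes> t"
proof -
  obtain e m where e: "e \<in> carrier G" "g = e [^] (m::int)"
    and C: "\<forall>y\<in>carrier G. y \<otimes> g = g \<otimes> y \<longrightarrow> (\<exists>j::int. y = e [^] j)"
    and inj: "\<forall>i j::int. e [^] i = e [^] j \<longrightarrow> i = j"
    using cent[OF g] by blast
  define h where "h = inv t \<otimes> g \<otimes> t"
  define u where "u = inv t \<otimes> e \<otimes> t"
  define v where "v = t \<otimes> e \<otimes> inv t"
  have hc: "h \<in> carrier G" and uc: "u \<in> carrier G" and vc: "v \<in> carrier G"
    using g t e by (auto simp: h_def u_def v_def)
  have hu: "h = u [^] m" unfolding h_def u_def using conj_pow[OF t e(1)] e(2) by simp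
  have hne: "h \<noteq> \<one>"
  proof
    assume "h = \<one>"
    then have "t \<otimes> h \<otimes> inv t = \<one>" using t by simp
    then show False using g t by (simp add: h_def m_assoc)
  qed
  have commC: "y \<otimes> g = g \<otimes> y" if "y \<in> carrier G" "y \<otimes> e = e \<otimes> y" for y
    using comm_int_pow[OF that(1) e(1) that(2)] e(2) by simp
  have ue: "u \<otimes> e = e \<otimes> u"
  proof -
    obtain a :: int where ha: "h = e [^] a" using C hc cm by (auto simp: h_def)
    have "u \<otimes> h = h \<otimes> u" using hu comm_int_pow[OF uc uc refl] by simp
    moreover have "e \<otimes> h = h \<otimes> e" using ha comm_int_pow[OF e(1) e(1) refl] by simp
    ultimately show ?thesis using CT[OF hc hne uc e(1)] by simp
  qed
  then obtain j :: int where uj: "u = e [^] j" using C uc commC by blast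
  define g' where "g' = t \<otimes> g \<otimes> inv t"
  have g'c: "g' \<in> carrier G" using g t by (simp add: g'_def)
  have g'v: "g' = v [^] m"
    unfolding g'_def v_def using conj_pow[of "inv t" e m] t e by simp
  have g'ne: "g' \<noteq> \<one>"
  proof
    assume "g' = \<one>"
    then have "inv t \<otimes> g' \<otimes> t = \<one>" using t by simp
    then show False using g t by (simp add: g'_def m_assoc)
  qed
  have tht: "t \<otimes> h \<otimes> inv t = g" using g t by (simp add: h_def m_assoc)
  have g'g: "g' \<otimes> g = g \<otimes> g'"
  proof -
    have "g' \<otimes> g = (t \<otimes> g \<otimes> inv t) \<otimes> (t \<otimes> h \<otimes> inv t)" by (simp add: g'_def tht)
    also have "\<dots> = t \<otimes> (g \<otimes> h) \<otimes> inv t" using g t hc by (simp add: m_assoc)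
    also have "\<dots> = t \<otimes> (h \<otimes> g) \<otimes> inv t" using cm by (simp add: h_def)
    also have "\<dots> = (t \<otimes> h \<otimes> inv t) \<otimes> (t \<otimes> g \<otimes> inv t)" using g t hc by (simp add: m_assoc)
    also have "\<dots> = g \<otimes> g'" by (simp add: g'_def tht)
    finally show ?thesis .
  qed
  have ve: "v \<otimes> e = e \<otimes> v"
  proof -
    obtain a :: int where ha: "g' = e [^] a" using C g'c g'g by auto
    have "v \<otimes> g' = g' \<otimes> v" using g'v comm_int_pow[OF vc vc refl] by simp
    moreover have "e \<otimes> g' = g' \<otimes> e" using ha comm_int_pow[OF e(1) e(1) refl] by simp
    ultimately show ?thesis using CT[OF g'c g'ne vc e(1)] by simp
  qed
  then obtain j' :: int where vj: "v = e [^] j'" using C vc commC by blast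
  have "e = inv t \<otimes> v \<otimes> t" using t e by (simp add: v_def m_assoc)
  also have "\<dots> = u [^] j'" unfolding u_def using conj_pow[OF t e(1)] vj by simp
  also have "\<dots> = e [^] (j * j')" using uj int_pow_pow[OF e(1)] by simp
  finally have "e [^] (1::int) = e [^] (j * j')" using e by simp
  then have "1 = j * j'" using inj by blast
  then have j1: "j = 1 \<or> j = -1" using pos_zmult_eq_1_iff_lemma by metis
  have ninv: "e \<noteq> inv e"
  proof
    assume "e = inv e"
    then have "e [^] (1::int) = e [^] (-1::int)" using e by (simp add: int_pow_neg)
    then show False using inj by fastforce
  qed
  have c1: "t \<otimes> e = e \<otimes> t" if "u = e"
  proof -
    have "t \<otimes> u = t \<otimes> e" using that by simp
    then show ?thesis using t e by (simp add: u_def m_assoc)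
  qed
  have c2: False if "u = inv e"
  proof -
    define w where "w = t \<otimes> t"
    have wc: "w \<in> carrier G" using t by (simp add: w_def)
    have "inv w \<otimes> e \<otimes> w = inv t \<otimes> u \<otimes> t" using t e by (simp add: w_def u_def inv_mult_group m_assoc)
    also have "\<dots> = inv t \<otimes> inv e \<otimes> t" using that by simp
    also have "\<dots> = inv u" using t e by (simp add: u_def inv_mult_group m_assoc)
    also have "\<dots> = e" using that e by simp
    finally have we: "inv w \<otimes> e \<otimes> w = e" .
    have ew: "e \<otimes> w = w \<otimes> e"
    proof -
      have "w \<otimes> (inv w \<otimes> e \<otimes> w) = w \<otimes> e" using we by simp
      then show ?thesis using wc e by (simp add: m_assoc)
    qed
    have "t \<otimes> e = e \<otimes> t"
    proof (cases "w = \<one>")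
      case True
      then have "t \<otimes> t = \<one>" by (simp add: w_def)
      then have "t = \<one>" using tf2[OF t] by blast
      then show ?thesis using e by simp
    next
      case False
      have "t \<otimes> w = w \<otimes> t" using t by (simp add: w_def m_assoc)
      then show ?thesis using CT[OF wc False t e(1)] ew by simp
    qed
    then have "u = inv t \<otimes> (t \<otimes> e)" using t e by (simp add: u_def m_assoc)
    then have "u = e" using t e by simp
    then show False using that ninv by simp
  qed
  have "t \<otimes> e = e \<otimes> t"
  proof (cases "j = 1")
    case True
    then show ?thesis using uj e(1) c1 by simp
  next
    case False
    then have "j = -1" using j1 by simp
    then have "u = inv e" using uj int_pow_neg[OF e(1), of 1] e(1) by simp
    then show ?thesis using c2 by blast
  qed
  then show ?thesis using commC[OF t] by simp
qed

end


lemma cnf_FG: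
  assumes "X \<in> carrier FG" "X \<noteq> \<one>\<^bsub>FG\<^esub>"
  shows "\<exists>p z. p \<in> carrier FG \<and> cyc_red z \<and> X = inv\<^bsub>FG\<^esub> p \<otimes>\<^bsub>FG\<^esub> z \<otimes>\<^bsub>FG\<^esub> p"
proof -
  have rX: "reduced X" "X \<noteq> []" using assms by auto
  obtain p z where pz: "X = inv_word p @ z @ p" "z = [] \<or> cyc_red z" using cnf[OF rX(1)] by blast
  have rp: "reduced p" using rX pz by (simp add: reduced_append)
  have cz: "cyc_red z"
  proof (cases "z = []")
    case True
    then have "p \<noteq> []" using pz rX by auto
    then have "\<not> reduced X" using pz True by (simp add: reduced_append hd_inv_word last_inv_word)
    then show ?thesis using rX by simp
  qed (use pz in auto)
  have "inv\<^bsub>FG\<^esub> p \<otimes>\<^bsub>FG\<^esub> z \<otimes>\<^bsub>FG\<^esub> p = reduce (reduce (inv_word p @ z) @ p)"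
    using rp by (simp add: inv_free_group)
  also have "\<dots> = X" using pz rX by (simp add: reduce_append_left reduce_reduced)
  finally show ?thesis using rp cz by auto
qed

declare free_group_simps[simp del] carrier_FG[simp del]

lemmas fg_cancel[simp] = group.cancel_l1[OF group_free_group] group.cancel_l2[OF group_free_group]

lemma comm_FG: "x \<in> carrier FG \<Longrightarrow> y \<in> carrier FG \<Longrightarrow>
   x \<otimes>\<^bsub>FG\<^esub> y = y \<otimes>\<^bsub>FG\<^esub> x \<longleftrightarrow> reduce (x @ y) = reduce (y @ x)"
  by (simp add: free_group_simps)

lemma conj_mult_FG: "a \<in> carrier FG \<Longrightarrow> x \<in> carrier FG \<Longrightarrow> y \<in> carrier FG \<Longrightarrow>
  (a \<otimes>\<^bsub>FG\<^esub> x \<otimes>\<^bsub>FG\<^esub> inv\<^bsub>FG\<^esub> a) \<otimes>\<^bsub>FG\<^esub> (a \<otimes>\<^bsub>FG\<^esub> y \<otimes>\<^bsub>FG\<^esub> inv\<^bsub>FG\<^esub> a) = a \<otimes>\<^bsub>FG\<^esub> (x \<otimes>\<^bsub>FG\<^esub> y) \<otimes>\<^bsub>FG\<^esub> inv\<^bsub>FG\<^esub> a"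
  by (simp add: fg.m_assoc)

lemma cent_FG:
  assumes X: "X \<in> carrier FG" "X \<noteq> \<one>\<^bsub>FG\<^esub>"
  shows "\<exists>e\<in>carrier FG. (\<exists>m::int. X = e [^]\<^bsub>FG\<^esub> m) \<and>
     (\<forall>y\<in>carrier FG. y \<otimes>\<^bsub>FG\<^esub> X = X \<otimes>\<^bsub>FG\<^esub> y \<longrightarrow> (\<exists>j::int. y = e [^]\<^bsub>FG\<^esub> j)) \<and>
     (\<forall>i j::int. e [^]\<^bsub>FG\<^esub> i = e [^]\<^bsub>FG\<^esub> j \<longrightarrow> i = j)"
proof -
  obtain p z where pz: "p \<in> carrier FG" "cyc_red z" "X = inv\<^bsub>FG\<^esub> p \<otimes>\<^bsub>FG\<^esub> z \<otimes>\<^bsub>FG\<^esub> p"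
    using cnf_FG[OF X] by blast
  have zc: "z \<in> carrier FG" using pz(2) by (rule cyc_red_carrier)
  obtain e0 m where e0: "m \<ge> 1" "z = concat (replicate m e0)" "cyc_red e0"
    and C0: "\<forall>y. reduced y \<longrightarrow> reduce (y @ z) = reduce (z @ y) \<longrightarrow> (\<exists>j::int. y = e0 [^]\<^bsub>FG\<^esub> j)"
    using prim[OF pz(2)] by blast
  have e0c: "e0 \<in> carrier FG" using e0(3) by (rule cyc_red_carrier)
  have ze: "z = e0 [^]\<^bsub>FG\<^esub> (int m)" using e0 pow_cyc int_pow_int by metis
  define e where "e = inv\<^bsub>FG\<^esub> p \<otimes>\<^bsub>FG\<^esub> e0 \<otimes>\<^bsub>FG\<^esub> p"
  have ec: "e \<in> carrier FG" using pz e0c by (simp add: e_def)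
  have epow: "e [^]\<^bsub>FG\<^esub> (i::int) = inv\<^bsub>FG\<^esub> p \<otimes>\<^bsub>FG\<^esub> e0 [^]\<^bsub>FG\<^esub> i \<otimes>\<^bsub>FG\<^esub> p" for i
    unfolding e_def by (rule group.conj_pow[OF group_free_group pz(1) e0c])
  have "X = e [^]\<^bsub>FG\<^esub> (int m)" using pz(3) ze epow by simp
  moreover have "\<exists>j::int. y = e [^]\<^bsub>FG\<^esub> j" if yc: "y \<in> carrier FG" and cm: "y \<otimes>\<^bsub>FG\<^esub> X = X \<otimes>\<^bsub>FG\<^esub> y" for y
  proof -
    define y0 where "y0 = p \<otimes>\<^bsub>FG\<^esub> y \<otimes>\<^bsub>FG\<^esub> inv\<^bsub>FG\<^esub> p"
    have y0c: "y0 \<in> carrier FG" using yc pz by (simp add: y0_def)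
    have zX: "z = p \<otimes>\<^bsub>FG\<^esub> X \<otimes>\<^bsub>FG\<^esub> inv\<^bsub>FG\<^esub> p" using pz zc by (simp add: fg.m_assoc)
    have "y0 \<otimes>\<^bsub>FG\<^esub> z = p \<otimes>\<^bsub>FG\<^esub> (y \<otimes>\<^bsub>FG\<^esub> X) \<otimes>\<^bsub>FG\<^esub> inv\<^bsub>FG\<^esub> p"
      unfolding y0_def zX by (rule conj_mult_FG[OF pz(1) yc X(1)])
    also have "\<dots> = p \<otimes>\<^bsub>FG\<^esub> (X \<otimes>\<^bsub>FG\<^esub> y) \<otimes>\<^bsub>FG\<^esub> inv\<^bsub>FG\<^esub> p" using cm by simp
    also have "\<dots> = z \<otimes>\<^bsub>FG\<^esub> y0"
      unfolding y0_def zX by (rule conj_mult_FG[OF pz(1) X(1) yc, symmetric])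
    finally have "reduce (y0 @ z) = reduce (z @ y0)" using comm_FG[OF y0c zc] by simp
    then obtain j :: int where y0j: "y0 = e0 [^]\<^bsub>FG\<^esub> j" using C0 y0c by (auto simp: carrier_FG)
    have "y = inv\<^bsub>FG\<^esub> p \<otimes>\<^bsub>FG\<^esub> y0 \<otimes>\<^bsub>FG\<^esub> p" using yc pz(1) by (simp add: y0_def fg.m_assoc)
    then have "y = e [^]\<^bsub>FG\<^esub> j" using epow y0j by simp
    then show ?thesis by blast
  qed
  moreover have "i = j" if "e [^]\<^bsub>FG\<^esub> (i::int) = e [^]\<^bsub>FG\<^esub> j" for i j
  proof -
    have "p \<otimes>\<^bsub>FG\<^esub> e [^]\<^bsub>FG\<^esub> i \<otimes>\<^bsub>FG\<^esub> inv\<^bsub>FG\<^esub> p = p \<otimes>\<^bsub>FG\<^esub> e [^]\<^bsub>FG\<^esub> j \<otimes>\<^bsub>FG\<^esub> inv\<^bsub>FG\<^esub> p"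
      using that by simp
    then have "e0 [^]\<^bsub>FG\<^esub> i = e0 [^]\<^bsub>FG\<^esub> j" using epow pz e0c by (simp add: fg.m_assoc)
    then show ?thesis using R2[OF e0(3)] by blast
  qed
  ultimately show ?thesis using ec by blast
qed

interpretation fgc: cycc "free_group UNIV"
proof
  fix X :: "'a word" assume "X \<in> carrier FG" "X \<noteq> \<one>\<^bsub>FG\<^esub>"
  then show "\<exists>e\<in>carrier FG. (\<exists>m::int. X = e [^]\<^bsub>FG\<^esub> m) \<and>
     (\<forall>y\<in>carrier FG. y \<otimes>\<^bsub>FG\<^esub> X = X \<otimes>\<^bsub>FG\<^esub> y \<longrightarrow> (\<exists>j::int. y = e [^]\<^bsub>FG\<^esub> j)) \<and>
     (\<forall>i j::int. e [^]\<^bsub>FG\<^esub> i = e [^]\<^bsub>FG\<^esub> j \<longrightarrow> i = j)" by (rule cent_FG)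
next
  fix t :: "'a word" assume t: "t \<in> carrier FG" "t \<otimes>\<^bsub>FG\<^esub> t = \<one>\<^bsub>FG\<^esub>"
  show "t = \<one>\<^bsub>FG\<^esub>"
  proof (rule ccontr)
    assume "t \<noteq> \<one>\<^bsub>FG\<^esub>"
    from cent_FG[OF t(1) this] obtain e m where e: "e \<in> carrier FG" "t = e [^]\<^bsub>FG\<^esub> (m::int)"
      "\<forall>i j::int. e [^]\<^bsub>FG\<^esub> i = e [^]\<^bsub>FG\<^esub> j \<longrightarrow> i = j" by blast
    have "e [^]\<^bsub>FG\<^esub> (m + m) = t \<otimes>\<^bsub>FG\<^esub> t" by (simp only: e(2) fg.int_pow_mult[OF e(1)])
    then have "e [^]\<^bsub>FG\<^esub> (m + m) = e [^]\<^bsub>FG\<^esub> (0::int)" using t by simp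
    then have "m = 0" using e(3) by fastforce
    then show False using e \<open>t \<noteq> _\<close> by simp
  qed
qed


context group begin
lemma comm_iff:
  assumes "a \<in> carrier G" "b \<in> carrier G"
  shows "(inv a \<otimes> (inv b \<otimes> (a \<otimes> b)) = \<one>) \<longleftrightarrow> (a \<otimes> b = b \<otimes> a)"
proof -
  have e: "inv a \<otimes> (inv b \<otimes> (a \<otimes> b)) = inv (b \<otimes> a) \<otimes> (a \<otimes> b)"
    using assms by (simp add: inv_mult_group m_assoc)
  show ?thesis
  proof
    assume "inv a \<otimes> (inv b \<otimes> (a \<otimes> b)) = \<one>"
    then have "(b \<otimes> a) \<otimes> (inv (b \<otimes> a) \<otimes> (a \<otimes> b)) = b \<otimes> a" using e assms by simp
    then show "a \<otimes> b = b \<otimes> a" using assms by simp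
  next
    assume "a \<otimes> b = b \<otimes> a"
    then show "inv a \<otimes> (inv b \<otimes> (a \<otimes> b)) = \<one>" using e assms by simp
  qed
qed
end

lemma words_on_single[simp]: "[(s, b)] \<in> words_on S \<longleftrightarrow> s \<in> S"
  by (simp add: words_on_def)

locale phictx =
  fixes S :: "'a set" and \<phi> :: "'a word \<Rightarrow> 'b word"
  assumes hom: "\<phi> \<in> hom (free_group S) (free_group UNIV)"
begin

definition psi where "psi w = \<phi> (reduce w)"

lemma gh: "group_hom (free_group S) (free_group UNIV) \<phi>"
  using hom by (simp add: group_hom_def group_hom_axioms_def group_free_group)

lemma red_carrier: "u \<in> words_on S \<Longrightarrow> reduce u \<in> carrier (free_group S)"
  by (simp add: free_group_simps words_on_reduce)

lemma psi_carrier[simp]: "u \<in> words_on S \<Longrightarrow> psi u \<in> carrier FG"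
  unfolding psi_def using group_hom.hom_closed[OF gh red_carrier] by blast

lemma psi_app: "u \<in> words_on S \<Longrightarrow> v \<in> words_on S \<Longrightarrow> psi (u @ v) = psi u \<otimes>\<^bsub>FG\<^esub> psi v"
proof -
  assume u: "u \<in> words_on S" and v: "v \<in> words_on S"
  have "reduce (u @ v) = reduce u \<otimes>\<^bsub>free_group S\<^esub> reduce v"
    by (simp add: free_group_simps reduce_append_left reduce_append_right)
  then show ?thesis unfolding psi_def
    using group_hom.hom_mult[OF gh red_carrier[OF u] red_carrier[OF v]] by simp
qed

lemma psi_inv: "u \<in> words_on S \<Longrightarrow> psi (inv_word u) = inv\<^bsub>FG\<^esub> (psi u)"
proof -
  assume u: "u \<in> words_on S"
  have "reduce (inv_word u) = inv\<^bsub>free_group S\<^esub> (reduce u)"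
    using inv_free_group[OF red_carrier[OF u]] by (simp add: reduce_inv)
  then show ?thesis unfolding psi_def
    using group_hom.hom_inv[OF gh red_carrier[OF u]] by simp
qed

lemma psi_Nil[simp]: "psi [] = \<one>\<^bsub>FG\<^esub>"
  unfolding psi_def using group_hom.hom_one[OF gh] by (simp add: free_group_simps)

lemma psi_comm: "u \<in> words_on S \<Longrightarrow> v \<in> words_on S \<Longrightarrow>
  psi (commutator_word u v) = inv\<^bsub>FG\<^esub> (psi u) \<otimes>\<^bsub>FG\<^esub> (inv\<^bsub>FG\<^esub> (psi v) \<otimes>\<^bsub>FG\<^esub> (psi u \<otimes>\<^bsub>FG\<^esub> psi v))"
  by (simp add: commutator_word_def psi_app psi_inv)

lemma psi_comm_one: "u \<in> words_on S \<Longrightarrow> v \<in> words_on S \<Longrightarrow>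
  psi (commutator_word u v) = \<one>\<^bsub>FG\<^esub> \<longleftrightarrow> psi u \<otimes>\<^bsub>FG\<^esub> psi v = psi v \<otimes>\<^bsub>FG\<^esub> psi u"
  by (simp add: psi_comm fg.comm_iff)

lemma psi_conj: "s \<in> S \<Longrightarrow> r \<in> words_on S \<Longrightarrow>
  psi ([(s, False)] @ r @ [(s, True)]) = inv\<^bsub>FG\<^esub> (psi [(s, True)]) \<otimes>\<^bsub>FG\<^esub> psi r \<otimes>\<^bsub>FG\<^esub> psi [(s, True)]"
proof -
  assume s: "s \<in> S" and r: "r \<in> words_on S"
  have "[(s, False)] = inv_word [(s, True)]" by simp
  then have "psi [(s, False)] = inv\<^bsub>FG\<^esub> (psi [(s, True)])" using psi_inv[of "[(s, True)]"] s by simp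
  then show ?thesis using s r by (simp add: psi_app fg.m_assoc del: append_Cons append_Nil)
qed

lemma gen_comm:
  assumes c: "c \<in> carrier FG" and gens: "\<forall>s\<in>S. psi [(s, True)] \<otimes>\<^bsub>FG\<^esub> c = c \<otimes>\<^bsub>FG\<^esub> psi [(s, True)]"
  shows "w \<in> words_on S \<Longrightarrow> psi w \<otimes>\<^bsub>FG\<^esub> c = c \<otimes>\<^bsub>FG\<^esub> psi w"
proof (induct w)
  case Nil
  then show ?case using c by simp
next
  case (Cons x w)
  obtain s b where x: "x = (s, b)" by (cases x)
  have s: "s \<in> S" and w: "w \<in> words_on S" using Cons.prems x by (auto simp: words_on_def)
  have cx: "psi [x] \<otimes>\<^bsub>FG\<^esub> c = c \<otimes>\<^bsub>FG\<^esub> psi [x]"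
  proof (cases b)
    case True
    then show ?thesis using gens s x by simp
  next
    case False
    have "[(s, False)] = inv_word [(s, True)]" by simp
    then have "psi [x] = inv\<^bsub>FG\<^esub> (psi [(s, True)])" using psi_inv[of "[(s, True)]"] s x False by simp
    moreover have "c \<otimes>\<^bsub>FG\<^esub> inv\<^bsub>FG\<^esub> (psi [(s, True)]) = inv\<^bsub>FG\<^esub> (psi [(s, True)]) \<otimes>\<^bsub>FG\<^esub> c"
      using group.comm_inv[OF group_free_group c psi_carrier[of "[(s, True)]"]] gens s by simp
    ultimately show ?thesis by simp
  qed
  have "psi (x # w) = psi [x] \<otimes>\<^bsub>FG\<^esub> psi w" using psi_app[of "[x]" w] s w x by simp
  moreover have "psi [x] \<in> carrier FG" using s x by simp
  ultimately show ?case using Cons.hyps[OF w] cx c w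
    by (simp add: fg.m_assoc) (metis fg.m_assoc psi_carrier)
qed

end


lemma nested_Suc: "k \<ge> 1 \<Longrightarrow> nested_comm S R (Suc k) = comm_set (conj_S0 S (R (Suc k))) (nested_comm S R k)"
  by (cases k) auto

lemma conj_words: "R' \<subseteq> words_on S \<Longrightarrow> conj_S0 S R' \<subseteq> words_on S"
  unfolding conj_S0_def by (auto simp del: append_Cons append_Nil)

lemma comm_words: "A \<subseteq> words_on S \<Longrightarrow> B \<subseteq> words_on S \<Longrightarrow> comm_set A B \<subseteq> words_on S"
  by (auto simp: comm_set_def commutator_word_def)

lemma nested_words:
  assumes "\<forall>i\<in>{1..n}. R i \<subseteq> words_on S"
  shows "1 \<le> k \<Longrightarrow> k \<le> n \<Longrightarrow> nested_comm S R k \<subseteq> words_on S"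
proof (induct k)
  case (Suc k)
  show ?case
  proof (cases "k = 0")
    case True
    then show ?thesis using assms Suc.prems by auto
  next
    case False
    then show ?thesis using Suc assms
      by (simp add: nested_Suc) (intro comm_words conj_words, auto)
  qed
qed simp

context phictx begin

lemma key:
  assumes Xc: "X \<in> carrier FG" and Xne: "X \<noteq> \<one>\<^bsub>FG\<^esub>" and r: "r \<in> words_on S" and rne: "psi r \<noteq> \<one>\<^bsub>FG\<^esub>"
    and nonab: "\<exists>x\<in>carrier (free_group S). \<exists>y\<in>carrier (free_group S).
           \<phi> x \<otimes>\<^bsub>FG\<^esub> \<phi> y \<noteq> \<phi> y \<otimes>\<^bsub>FG\<^esub> \<phi> x"
    and cm: "\<forall>u\<in>conj_S0 S {r}. psi u \<otimes>\<^bsub>FG\<^esub> X = X \<otimes>\<^bsub>FG\<^esub> psi u"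
  shows False
proof -
  define g where "g = psi r"
  have gc: "g \<in> carrier FG" using r by (simp add: g_def)
  have gne: "g \<noteq> \<one>\<^bsub>FG\<^esub>" using rne by (simp add: g_def)
  have gX: "g \<otimes>\<^bsub>FG\<^esub> X = X \<otimes>\<^bsub>FG\<^esub> g" using cm by (simp add: g_def conj_S0_def)
  have ag: "psi [(s, True)] \<otimes>\<^bsub>FG\<^esub> g = g \<otimes>\<^bsub>FG\<^esub> psi [(s, True)]" if s: "s \<in> S" for s
  proof -
    define a where "a = psi [(s, True)]"
    have ac: "a \<in> carrier FG" using s by (simp add: a_def)
    define h where "h = inv\<^bsub>FG\<^esub> a \<otimes>\<^bsub>FG\<^esub> g \<otimes>\<^bsub>FG\<^esub> a"
    have hc: "h \<in> carrier FG" using ac gc by (simp add: h_def)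
    have "[(s, False)] @ r @ [(s, True)] \<in> conj_S0 S {r}" using s by (auto simp: conj_S0_def)
    then have "psi ([(s, False)] @ r @ [(s, True)]) \<otimes>\<^bsub>FG\<^esub> X = X \<otimes>\<^bsub>FG\<^esub> psi ([(s, False)] @ r @ [(s, True)])"
      using cm by blast
    then have hX: "h \<otimes>\<^bsub>FG\<^esub> X = X \<otimes>\<^bsub>FG\<^esub> h"
      using psi_conj[OF s r] by (simp add: h_def a_def g_def del: append_Cons append_Nil)
    have "g \<otimes>\<^bsub>FG\<^esub> h = h \<otimes>\<^bsub>FG\<^esub> g" using fgc.CT[OF Xc Xne gc hc gX hX] .
    then have "a \<otimes>\<^bsub>FG\<^esub> g = g \<otimes>\<^bsub>FG\<^esub> a" using fgc.Bp[OF gc gne ac] by (simp add: h_def)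
    then show ?thesis by (simp add: a_def)
  qed
  have aa: "psi [(s, True)] \<otimes>\<^bsub>FG\<^esub> psi [(s', True)] = psi [(s', True)] \<otimes>\<^bsub>FG\<^esub> psi [(s, True)]"
    if "s \<in> S" "s' \<in> S" for s s'
    using fgc.CT[OF gc gne _ _ ag[OF that(1)] ag[OF that(2)]] that by simp
  obtain x y where xy: "x \<in> carrier (free_group S)" "y \<in> carrier (free_group S)"
    "\<phi> x \<otimes>\<^bsub>FG\<^esub> \<phi> y \<noteq> \<phi> y \<otimes>\<^bsub>FG\<^esub> \<phi> x" using nonab by blast
  have xw: "x \<in> words_on S" "reduced x" and yw: "y \<in> words_on S" "reduced y"
    using xy by (auto simp: free_group_simps)
  have px: "\<phi> x = psi x" and py: "\<phi> y = psi y" using xw yw by (simp_all add: psi_def reduce_reduced)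
  have "psi y \<otimes>\<^bsub>FG\<^esub> psi [(s', True)] = psi [(s', True)] \<otimes>\<^bsub>FG\<^esub> psi y" if s': "s' \<in> S" for s'
    using gen_comm[of "psi [(s', True)]" y] s' aa yw by simp
  then have "psi x \<otimes>\<^bsub>FG\<^esub> psi y = psi y \<otimes>\<^bsub>FG\<^esub> psi x"
    using gen_comm[of "psi y" x] xw yw by (simp add: eq_commute)
  then show False using xy(3) px py by simp
qed

lemma dir1:
  assumes words: "\<forall>i\<in>{1..n}. R i \<subseteq> words_on S" and i: "i \<in> {1..n}"
    and triv: "\<forall>r\<in>R i. psi r = \<one>\<^bsub>FG\<^esub>"
  shows "i \<le> k \<Longrightarrow> k \<le> n \<Longrightarrow> \<forall>w\<in>nested_comm S R k. psi w = \<one>\<^bsub>FG\<^esub>"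
proof (induct k)
  case 0
  then show ?case using i by simp
next
  case (Suc k)
  show ?case
  proof (cases "i = Suc k")
    case True
    show ?thesis
    proof (cases "k = 0")
      case True
      then show ?thesis using triv \<open>i = Suc k\<close> by simp
    next
      case False
      then have k1: "k \<ge> 1" by simp
      have nk: "nested_comm S R k \<subseteq> words_on S" using nested_words[OF words k1] Suc.prems by simp
      have Ri: "R i \<subseteq> words_on S" using words i by blast
      have "psi u = \<one>\<^bsub>FG\<^esub>" if u: "u \<in> conj_S0 S (R i)" for u
      proof -
        from u consider "u \<in> R i" | s r where "s \<in> S" "r \<in> R i" "u = [(s, False)] @ r @ [(s, True)]"
          by (auto simp: conj_S0_def)
        then show ?thesis
        proof cases
          case 1 then show ?thesis using triv by simp
        next
          case (2 s r)
          then have "r \<in> words_on S" using Ri by blast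
          then show ?thesis using 2 psi_conj[of s r] triv
            by (simp del: append_Cons append_Nil)
        qed
      qed
      moreover have "conj_S0 S (R i) \<subseteq> words_on S" using Ri by (rule conj_words)
      ultimately have cw: "\<forall>u\<in>conj_S0 S (R i). psi u = \<one>\<^bsub>FG\<^esub> \<and> u \<in> words_on S" by blast
      show ?thesis
      proof
        fix w assume "w \<in> nested_comm S R (Suc k)"
        then obtain u v where uv: "u \<in> conj_S0 S (R i)" "v \<in> nested_comm S R k" "w = commutator_word u v"
          using True by (auto simp: nested_Suc[OF k1] comm_set_def)
        have vw: "v \<in> words_on S" using uv nk by blast
        show "psi w = \<one>\<^bsub>FG\<^esub>" using uv cw psi_comm[OF _ vw, of u] psi_carrier[OF vw] by simp
      qed
    qed
  next
    case False
    then have ik: "i \<le> k" and k1: "k \<ge> 1" using Suc.prems i by auto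
    have IH: "\<forall>w\<in>nested_comm S R k. psi w = \<one>\<^bsub>FG\<^esub>" using Suc ik by simp
    have nk: "nested_comm S R k \<subseteq> words_on S" using nested_words[OF words k1] Suc.prems by simp
    have cw: "conj_S0 S (R (Suc k)) \<subseteq> words_on S" using words Suc.prems k1 by (intro conj_words) auto
    show ?thesis
    proof
      fix w assume "w \<in> nested_comm S R (Suc k)"
      then obtain u v where uv: "u \<in> conj_S0 S (R (Suc k))" "v \<in> nested_comm S R k" "w = commutator_word u v"
        by (auto simp: nested_Suc[OF k1] comm_set_def)
      have vw: "v \<in> words_on S" using uv nk by blast
      have uw: "u \<in> words_on S" using uv cw by blast
      show "psi w = \<one>\<^bsub>FG\<^esub>" using uv IH psi_comm[OF uw vw] psi_carrier[OF uw] by simp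
    qed
  qed
qed

lemma dir2:
  assumes words: "\<forall>i\<in>{1..n}. R i \<subseteq> words_on S"
    and nonab: "\<exists>x\<in>carrier (free_group S). \<exists>y\<in>carrier (free_group S).
           \<phi> x \<otimes>\<^bsub>FG\<^esub> \<phi> y \<noteq> \<phi> y \<otimes>\<^bsub>FG\<^esub> \<phi> x"
    and nt: "\<forall>i\<in>{1..n}. \<exists>r\<in>R i. psi r \<noteq> \<one>\<^bsub>FG\<^esub>"
  shows "1 \<le> k \<Longrightarrow> k \<le> n \<Longrightarrow> \<exists>w\<in>nested_comm S R k. psi w \<noteq> \<one>\<^bsub>FG\<^esub>"
proof (induct k)
  case 0
  then show ?case by simp
next
  case (Suc k)
  show ?case
  proof (cases "k = 0")
    case True
    then show ?thesis using nt Suc.prems by auto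
  next
    case False
    then have k1: "k \<ge> 1" by simp
    obtain w where w: "w \<in> nested_comm S R k" "psi w \<noteq> \<one>\<^bsub>FG\<^esub>" using Suc k1 by auto
    have nk: "nested_comm S R k \<subseteq> words_on S" using nested_words[OF words k1] Suc.prems by simp
    then have ww: "w \<in> words_on S" using w by blast
    have "Suc k \<in> {1..n}" using Suc.prems by simp
    then obtain r where r: "r \<in> R (Suc k)" "psi r \<noteq> \<one>\<^bsub>FG\<^esub>" using nt by blast
    have RS: "R (Suc k) \<subseteq> words_on S" using words Suc.prems by auto
    then have rw: "r \<in> words_on S" using r by blast
    show ?thesis
    proof (rule ccontr)
      assume "\<not> ?thesis"
      then have all: "\<forall>w'\<in>nested_comm S R (Suc k). psi w' = \<one>\<^bsub>FG\<^esub>" by blast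
      have "psi u \<otimes>\<^bsub>FG\<^esub> psi w = psi w \<otimes>\<^bsub>FG\<^esub> psi u" if u: "u \<in> conj_S0 S {r}" for u
      proof -
        have uR: "u \<in> conj_S0 S (R (Suc k))" using u r by (auto simp: conj_S0_def)
        have uw: "u \<in> words_on S" using conj_words[of "{r}" S] rw u by blast
        have "commutator_word u w \<in> nested_comm S R (Suc k)"
          using uR w k1 by (auto simp: nested_Suc comm_set_def)
        then have "psi (commutator_word u w) = \<one>\<^bsub>FG\<^esub>" using all by blast
        then show ?thesis using psi_comm_one[OF uw ww] by simp
      qed
      then show False using key[of "psi w" r] ww w(2) rw r(2) nonab by simp
    qed
  qed
qed

end

theorem mainTheorem10:
  fixes S :: "'a set" and n :: nat and R :: "nat \<Rightarrow> 'a word set"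
    and \<phi> :: "'a word \<Rightarrow> 'b word"
  assumes "finite S" and "n \<ge> 2"
    and "\<forall>i\<in>{1..n}. finite (R i) \<and> R i \<subseteq> words_on S"
    and "\<phi> \<in> hom (free_group S) (free_group (UNIV :: 'b set))"
    and "\<exists>a b :: 'b. a \<noteq> b"
    and "\<exists>x\<in>carrier (free_group S). \<exists>y\<in>carrier (free_group S).
           \<phi> x \<otimes>\<^bsub>free_group (UNIV :: 'b set)\<^esub> \<phi> y \<noteq> \<phi> y \<otimes>\<^bsub>free_group (UNIV :: 'b set)\<^esub> \<phi> x"
  shows "(\<forall>r\<in>nested_comm S R n. \<phi> (reduce r) = \<one>\<^bsub>free_group (UNIV :: 'b set)\<^esub>) \<longleftrightarrow>
         (\<exists>i\<in>{1..n}. \<forall>r\<in>R i. \<phi> (reduce r) = \<one>\<^bsub>free_group (UNIV :: 'b set)\<^esub>)"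
proof -
  interpret phictx S \<phi> using assms(4) by unfold_locales
  have words: "\<forall>i\<in>{1..n}. R i \<subseteq> words_on S" using assms(3) by blast
  have n1: "1 \<le> n" using assms(2) by simp
  show ?thesis
  proof
    assume h: "\<forall>r\<in>nested_comm S R n. \<phi> (reduce r) = \<one>\<^bsub>free_group (UNIV :: 'b set)\<^esub>"
    show "\<exists>i\<in>{1..n}. \<forall>r\<in>R i. \<phi> (reduce r) = \<one>\<^bsub>free_group (UNIV :: 'b set)\<^esub>"
    proof (rule ccontr)
      assume "\<not> ?thesis"
      then have "\<forall>i\<in>{1..n}. \<exists>r\<in>R i. psi r \<noteq> \<one>\<^bsub>FG\<^esub>" by (auto simp: psi_def)
      from dir2[OF words assms(6) this n1 order_refl] h show False by (auto simp: psi_def)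
    qed
  next
    assume "\<exists>i\<in>{1..n}. \<forall>r\<in>R i. \<phi> (reduce r) = \<one>\<^bsub>free_group (UNIV :: 'b set)\<^esub>"
    then obtain i where i: "i \<in> {1..n}" "\<forall>r\<in>R i. psi r = \<one>\<^bsub>FG\<^esub>" by (auto simp: psi_def)
    have "i \<le> n" using i by simp
    from dir1[OF words i this order_refl]
    show "\<forall>r\<in>nested_comm S R n. \<phi> (reduce r) = \<one>\<^bsub>free_group (UNIV :: 'b set)\<^esub>" by (simp add: psi_def)
  qed
qed


end
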